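(* Let $\mathcal{X}\subseteq\{0,1\}^n$ be nonempty, $\hat c\in\mathbb{R}^n$, $C\in\mathbb{R}^{n\times m}$, and for $\lambda\ge 0$ let $\mathcal{U}(\lambda)=\{\hat c+C\xi:\xi\in\mathbb{R}^m,\ \|\xi\|_2\le\lambda\}$. Let $\Lambda\subseteq\mathbb{R}_{\ge 0}$ and $w:\Lambda\to\mathbb{R}_{\ge0}$ be such that $\int_\Lambda w(\lambda)\,d\lambda$ and $\int_\Lambda \lambda w(\lambda)\,d\lambda$ are finite, and define \[ val(x)=\int_\Lambda w(\lambda)\Big(\max_{c\in\mathcal{U}(\lambda)} c^t x\Big)\,d\lambda . \] Then there exists $\lambda'\ge 0$ such that every optimal solution of the single robust problem $\min_{x\in\mathcal{X}}\max_{c\in\mathcal{U}(\lambda')}c^tx$ is an optimal solution of $\min_{x\in\mathcal{X}} val(x)$; that is, an optimal solution of the latter problem can be found by solving a single robust problem with ellipsoidal uncertainty.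
   Context: This is the compromise approach to variable-sized (ellipsoidal) uncertainty for min-max robust combinatorial optimization with nominal problem $\min\{c^tx:x\in\mathcal{X}\}$. *)

theory Defs
  imports "HOL-Analysis.Analysis"
begin

definition unc_set :: "real^'n \<Rightarrow> real^'m^'n \<Rightarrow> real \<Rightarrow> (real^'n) set" where
  "unc_set chat C lam = {chat + C *v xi | xi. norm xi \<le> lam}"

definition rob_obj :: "real^'n \<Rightarrow> real^'m^'n \<Rightarrow> real \<Rightarrow> real^'n \<Rightarrow> real" where
  "rob_obj chat C lam x = Sup {c \<bullet> x | c. c \<in> unc_set chat C lam}"

definition comp_val :: "real set \<Rightarrow> (real \<Rightarrow> real) \<Rightarrow> real^'n \<Rightarrow> real^'m^'n \<Rightarrow> real^'n \<Rightarrow> real" where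
  "comp_val Lam w chat C x = (LINT lam:Lam|lborel. w lam * rob_obj chat C lam x)"

definition is_opt :: "('a \<Rightarrow> real) \<Rightarrow> 'a set \<Rightarrow> 'a \<Rightarrow> bool" where
  "is_opt f X x \<longleftrightarrow> x \<in> X \<and> (\<forall>y\<in>X. f x \<le> f y)"

end

theory Submission
  imports Defs
begin
lemma mv_inner: fixes C :: "real^'m^'n"
  shows "(C *v xi) \<bullet> x = xi \<bullet> (transpose C *v x)"
  unfolding inner_vec_def matrix_vector_mult_def transpose_def
  by (simp add: sum_distrib_left sum_distrib_right mult_ac) (rule sum.swap)

lemma rob_obj_eq: fixes C :: "real^'m^'n"
  assumes "lam \<ge> 0"
  shows "rob_obj chat C lam x = chat \<bullet> x + lam * norm (transpose C *v x)"
proof -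
  define v where "v = transpose C *v x"
  have S: "{c \<bullet> x | c. c \<in> unc_set chat C lam} = {chat \<bullet> x + xi \<bullet> v | xi. norm xi \<le> lam}"
    unfolding unc_set_def v_def
  proof (intro set_eqI iffI)
    fix y assume "y \<in> {c \<bullet> x |c. c \<in> {chat + C *v xi |xi. norm xi \<le> lam}}"
    then obtain xi where "y = (chat + C *v xi) \<bullet> x" "norm xi \<le> lam" by blast
    then show "y \<in> {chat \<bullet> x + xi \<bullet> (transpose C *v x) |xi. norm xi \<le> lam}"
      by (auto simp: inner_add_left mv_inner)
  next
    fix y assume "y \<in> {chat \<bullet> x + xi \<bullet> (transpose C *v x) |xi. norm xi \<le> lam}"
    then obtain xi where "y = chat \<bullet> x + xi \<bullet> (transpose C *v x)" "norm xi \<le> lam" by blast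
    then have "y = (chat + C *v xi) \<bullet> x" "norm xi \<le> lam" by (auto simp: inner_add_left mv_inner)
    then show "y \<in> {c \<bullet> x |c. c \<in> {chat + C *v xi |xi. norm xi \<le> lam}}" by blast
  qed
  define xi0 where "xi0 = (if v = 0 then 0 else (lam / norm v) *\<^sub>R v)"
  have n0: "norm xi0 \<le> lam" using assms by (simp add: xi0_def)
  have e0: "xi0 \<bullet> v = lam * norm v"
  proof (cases "v = 0")
    case False
    have "xi0 \<bullet> v = lam / norm v * (v \<bullet> v)" using False by (simp add: xi0_def)
    also have "v \<bullet> v = norm v * norm v" by (simp add: power2_norm_eq_inner[symmetric] power2_eq_square)
    finally show ?thesis using False by simp
  qed (simp add: xi0_def)
  show ?thesis unfolding rob_obj_def S v_def[symmetric]
  proof (rule cSup_eq_maximum)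
    show "chat \<bullet> x + lam * norm v \<in> {chat \<bullet> x + xi \<bullet> v |xi. norm xi \<le> lam}"
      using n0 e0 by (metis (mono_tags, lifting) mem_Collect_eq)
  next
    fix y assume "y \<in> {chat \<bullet> x + xi \<bullet> v |xi. norm xi \<le> lam}"
    then obtain xi where y: "y = chat \<bullet> x + xi \<bullet> v" "norm xi \<le> lam" by auto
    have "xi \<bullet> v \<le> norm xi * norm v" by (rule norm_cauchy_schwarz)
    also have "\<dots> \<le> lam * norm v" using y(2) by (simp add: mult_right_mono)
    finally show "y \<le> chat \<bullet> x + lam * norm v" using y(1) by simp
  qed
qed

lemma comp_val_eq:
  fixes C :: "real^'m^'n"
  assumes Lam: "Lam \<subseteq> {0..}"
    and i1: "set_integrable lborel Lam w"
    and i2: "set_integrable lborel Lam (\<lambda>lam. lam * w lam)"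
  shows "comp_val Lam w chat C x = (chat \<bullet> x) * (LINT lam:Lam|lborel. w lam)
           + norm (transpose C *v x) * (LINT lam:Lam|lborel. lam * w lam)"
proof -
  let ?a = "chat \<bullet> x" and ?b = "norm (transpose C *v x)"
  have "(\<lambda>lam. indicator Lam lam *\<^sub>R (w lam * rob_obj chat C lam x)) =
    (\<lambda>lam. ?a * (indicator Lam lam *\<^sub>R w lam) + ?b * (indicator Lam lam *\<^sub>R (lam * w lam)))"
  proof
    fix lam show "indicator Lam lam *\<^sub>R (w lam * rob_obj chat C lam x) =
      ?a * (indicator Lam lam *\<^sub>R w lam) + ?b * (indicator Lam lam *\<^sub>R (lam * w lam))"
    proof (cases "lam \<in> Lam")
      case True
      then have "lam \<ge> 0" using Lam by auto
      then show ?thesis using True by (simp add: rob_obj_eq algebra_simps)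
    qed simp
  qed
  moreover have "integrable lborel (\<lambda>lam. indicator Lam lam *\<^sub>R w lam)"
    using i1 by (simp add: set_integrable_def)
  moreover have "integrable lborel (\<lambda>lam. indicator Lam lam *\<^sub>R (lam * w lam))"
    using i2 by (simp add: set_integrable_def)
  ultimately show ?thesis
    unfolding comp_val_def set_lebesgue_integral_def
    by (simp add: integral_add integral_mult_right_zero)
qed

lemma L_zero:
  assumes nn: "\<forall>lam\<in>Lam. w lam \<ge> 0" and Lam: "Lam \<subseteq> {0..}"
    and i1: "set_integrable lborel Lam w"
    and W0: "(LINT lam:Lam|lborel. w lam) = 0"
  shows "(LINT lam:Lam|lborel. lam * w lam) = (0::real)"
proof -
  have int: "integrable lborel (\<lambda>lam. indicator Lam lam *\<^sub>R w lam)"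
    using i1 by (simp add: set_integrable_def)
  have "AE lam in lborel. indicator Lam lam *\<^sub>R w lam = (0::real)"
    using W0 int nn unfolding set_lebesgue_integral_def
    by (subst integral_nonneg_eq_0_iff_AE[symmetric]) (auto simp: indicator_def)
  then have "AE lam in lborel. indicator Lam lam *\<^sub>R (lam * w lam) = (0::real)"
    by eventually_elim (simp add: indicator_def split: if_splits)
  then show ?thesis unfolding set_lebesgue_integral_def by (rule integral_eq_zero_AE)
qed

theorem theorem2:
  fixes X :: "(real^'n) set" and chat :: "real^'n" and C :: "real^'m^'n"
    and Lam :: "real set" and w :: "real \<Rightarrow> real"
  assumes "X \<noteq> {}"
    and "\<forall>x\<in>X. \<forall>i. x $ i \<in> {0, 1}"
    and "Lam \<subseteq> {0..}"
    and "\<forall>lam\<in>Lam. w lam \<ge> 0"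
    and "set_integrable lborel Lam w"
    and "set_integrable lborel Lam (\<lambda>lam. lam * w lam)"
  shows "\<exists>lam'\<ge>0. \<forall>x. is_opt (rob_obj chat C lam') X x \<longrightarrow>
                        is_opt (comp_val Lam w chat C) X x"
proof -
  define W where "W = (LINT lam:Lam|lborel. w lam)"
  define L where "L = (LINT lam:Lam|lborel. lam * w lam)"
  have cv: "\<And>x. comp_val Lam w chat C x = (chat \<bullet> x) * W + norm (transpose C *v x) * L"
    using comp_val_eq[OF assms(3,5,6)] unfolding W_def L_def by simp
  have W0: "W \<ge> 0" unfolding W_def set_lebesgue_integral_def
    using assms(4) by (intro Bochner_Integration.integral_nonneg) (auto simp: indicator_def)
  have L0: "L \<ge> 0" unfolding L_def set_lebesgue_integral_def
    using assms(3,4) by (intro Bochner_Integration.integral_nonneg) (auto simp: indicator_def)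
  show ?thesis
  proof (cases "W = 0")
    case True
    then have "L = 0" using L_zero[OF assms(4,3,5)] unfolding W_def L_def by simp
    then show ?thesis using True cv by (auto simp: is_opt_def)
  next
    case False
    then have Wp: "W > 0" using W0 by simp
    have eq: "\<And>x. comp_val Lam w chat C x = W * rob_obj chat C (L / W) x"
      using Wp L0 by (simp add: cv rob_obj_eq algebra_simps)
    show ?thesis
      using Wp L0 by (intro exI[of _ "L / W"]) (auto simp: is_opt_def eq)
  qed
qed

end
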